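(* Let $\mathcal G$ be a finite-state CFG, let $0<p<1$, and suppose $\Pr_{term}(\mathcal G)\ge1-p$. Then there exist the following objects: - an inductive invariant $\mathsf{Inv}$ containing the initial state $\sigma_{init}$; - a function $\mathsf{SI}:\mathsf{Inv}\to\mathbb R$ with $\mathsf{SI}(\sigma_{init})\le p$, $\mathsf{SI}\ge0$, and $\mathsf{SI}$ a supermartingale function on $\mathsf{Inv}$; - a real $\epsilon>0$; - a function $U:\mathsf{Inv}\to\mathbb N$, bounded above by some $H$, with $U(\gamma)=0$ for every $\gamma\in\mathsf{Inv}$ that satisfies $\mathsf{SI}(\gamma)\ge1$ or $\gamma=\sigma_\bot$. Moreover, for every other state $(l,\mathbf x)\in\mathsf{Inv}$: - if it is an assignment or nondeterministic state, then $U(\sigma')<U(l,\mathbf x)$ for every successor $\sigma'$; - if it is a probabilistic state, then $\sum\mathsf{Pr}(l,l')[\mathbf x]>\epsilon$, where the sum ranges over the successors $(l',\mathbf x')$ with $U(l',\mathbf x')<U(l,\mathbf x)$.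
   Context: A probabilistic control flow graph (CFG) is a tuple $\mathcal G=(L,V,l_{init},\mathbf x_{init},\mapsto,G,\mathsf{Pr},\mathsf{Upd})$. $L$ is a finite set of locations, partitioned into assignment, nondeterministic and probabilistic locations. The variables range over $\mathbb Q$. The initial state is $\sigma_{init}=(l_{init},\mathbf x_{init})$. There are finitely many guarded transitions. At probabilistic locations, each outgoing transition $(l,l')$ carries a probability expression $\mathsf{Pr}(l,l')$ whose values are positive and sum to $1$ over the enabled transitions. Assignment locations have at most one outgoing transition, carrying an update of one variable by an arithmetic expression. A state is a pair $(l,\mathbf x)$. Every state has at least one, and finitely many, successors. Schedulers map finite paths ending in nondeterministic states to successors and induce probability measures $\mathbb P_{\mathfrak s}$ on runs. The terminal state is $\sigma_\bot=(l_{out},\mathbf 0)$. $\Pr_{term}(\mathcal G)=\inf_{\mathfrak s}\mathbb P_{\mathfrak s}[\text{run visits }\sigma_\bot]$. $\mathcal G$ is finite-state if the set of states reachable from the initial state is finite. An inductive invariant is a set of states closed under successors. A function $f:\mathsf{Inv}\to\mathbb R$ is a supermartingale function on $\mathsf{Inv}$ if, at every non-terminal $(l,\mathbf x)\in\mathsf{Inv}$: - at assignment or nondeterministic states, $f(l,\mathbf x)\ge f(\sigma')$ for every successor $\sigma'$; - at probabilistic states, $f(l,\mathbf x)\ge\sum\mathsf{Pr}(l,l')[\mathbf x]f(l',\mathbf x')$, summed over successors. *)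

theory Defs
  imports Complex_Main
begin

datatype lockind = AssignLoc | NondetLoc | ProbLoc

type_synonym 'v valuation = "'v \<Rightarrow> rat"
type_synonym ('l, 'v) state = "'l \<times> 'v valuation"

record ('l, 'v) pcfg =
  locs  :: "'l set"
  kind  :: "'l \<Rightarrow> lockind"
  linit :: 'l
  xinit :: "'v valuation"
  lout  :: 'l
  trans :: "('l \<times> 'l) set"
  guard :: "'l \<Rightarrow> 'l \<Rightarrow> 'v valuation \<Rightarrow> bool"
  prb   :: "'l \<Rightarrow> 'l \<Rightarrow> 'v valuation \<Rightarrow> real"
  upd   :: "'l \<Rightarrow> 'l \<Rightarrow> 'v \<times> ('v valuation \<Rightarrow> rat)"

definition init_state :: "('l, 'v, 'z) pcfg_scheme \<Rightarrow> ('l, 'v) state" where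
  "init_state G = (linit G, xinit G)"

definition term_state :: "('l, 'v, 'z) pcfg_scheme \<Rightarrow> ('l, 'v) state" where
  "term_state G = (lout G, (\<lambda>_. 0))"

definition enabled :: "('l, 'v, 'z) pcfg_scheme \<Rightarrow> 'l \<Rightarrow> 'v valuation \<Rightarrow> 'l set" where
  "enabled G l x = {l'. (l, l') \<in> trans G \<and> guard G l l' x}"

definition step_val :: "('l, 'v, 'z) pcfg_scheme \<Rightarrow> 'l \<Rightarrow> 'l \<Rightarrow> 'v valuation \<Rightarrow> 'v valuation" where
  "step_val G l l' x =
     (if kind G l = AssignLoc then x(fst (upd G l l') := snd (upd G l l') x) else x)"

definition succs :: "('l, 'v, 'z) pcfg_scheme \<Rightarrow> ('l, 'v) state \<Rightarrow> ('l, 'v) state set" where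
  "succs G \<sigma> = (\<lambda>l'. (l', step_val G (fst \<sigma>) l' (snd \<sigma>))) ` enabled G (fst \<sigma>) (snd \<sigma>)"

definition wf_pcfg :: "('l, 'v, 'z) pcfg_scheme \<Rightarrow> bool" where
  "wf_pcfg G \<longleftrightarrow>
     finite (locs G) \<and> linit G \<in> locs G \<and> lout G \<in> locs G \<and>
     trans G \<subseteq> locs G \<times> locs G \<and>
     (\<forall>l \<in> locs G. kind G l = AssignLoc \<longrightarrow> card {l'. (l, l') \<in> trans G} \<le> 1) \<and>
     (\<forall>l \<in> locs G. kind G l = ProbLoc \<longrightarrow>
        (\<forall>x. (\<forall>l' \<in> enabled G l x. prb G l l' x > 0) \<and>
             (\<Sum>l' \<in> enabled G l x. prb G l l' x) = 1)) \<and>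
     (\<forall>l \<in> locs G. \<forall>x. succs G (l, x) \<noteq> {})"

definition reachable :: "('l, 'v, 'z) pcfg_scheme \<Rightarrow> ('l, 'v) state set" where
  "reachable G = {\<sigma>. (init_state G, \<sigma>) \<in> {(a, b). b \<in> succs G a}\<^sup>*}"

definition finite_state :: "('l, 'v, 'z) pcfg_scheme \<Rightarrow> bool" where
  "finite_state G \<longleftrightarrow> finite (reachable G)"

type_synonym ('l, 'v) scheduler = "('l, 'v) state list \<Rightarrow> ('l, 'v) state"

definition valid_sched :: "('l, 'v, 'z) pcfg_scheme \<Rightarrow> ('l, 'v) scheduler \<Rightarrow> bool" where
  "valid_sched G s \<longleftrightarrow>
     (\<forall>\<pi>. \<pi> \<noteq> [] \<longrightarrow> fst (last \<pi>) \<in> locs G \<longrightarrow> kind G (fst (last \<pi>)) = NondetLoc \<longrightarrow>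
          s \<pi> \<in> succs G (last \<pi>))"

text \<open>Probability, under scheduler s, that the run extending the finite path \<pi> visits
  the terminal state within n further steps (or has already visited it at the end of \<pi>).\<close>
fun reach_within ::
  "('l, 'v, 'z) pcfg_scheme \<Rightarrow> ('l, 'v) scheduler \<Rightarrow> nat \<Rightarrow> ('l, 'v) state list \<Rightarrow> real" where
  "reach_within G s 0 \<pi> = (if last \<pi> = term_state G then 1 else 0)"
| "reach_within G s (Suc n) \<pi> =
     (if last \<pi> = term_state G then 1 else
      (case kind G (fst (last \<pi>)) of
         ProbLoc \<Rightarrow> (\<Sum>l' \<in> enabled G (fst (last \<pi>)) (snd (last \<pi>)).
              prb G (fst (last \<pi>)) l' (snd (last \<pi>)) *
              reach_within G s n (\<pi> @ [(l', step_val G (fst (last \<pi>)) l' (snd (last \<pi>)))]))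
       | NondetLoc \<Rightarrow> reach_within G s n (\<pi> @ [s \<pi>])
       | AssignLoc \<Rightarrow> reach_within G s n (\<pi> @ [SOME \<sigma>'. \<sigma>' \<in> succs G (last \<pi>)])))"

definition term_prob :: "('l, 'v, 'z) pcfg_scheme \<Rightarrow> ('l, 'v) scheduler \<Rightarrow> real" where
  "term_prob G s = (SUP n. reach_within G s n [init_state G])"

definition Pr_term :: "('l, 'v, 'z) pcfg_scheme \<Rightarrow> real" where
  "Pr_term G = (INF s \<in> {s. valid_sched G s}. term_prob G s)"

definition inductive_invariant :: "('l, 'v, 'z) pcfg_scheme \<Rightarrow> ('l, 'v) state set \<Rightarrow> bool" where
  "inductive_invariant G Inv \<longleftrightarrow> (\<forall>\<sigma> \<in> Inv. succs G \<sigma> \<subseteq> Inv)"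

definition supermartingale_on ::
  "('l, 'v, 'z) pcfg_scheme \<Rightarrow> ('l, 'v) state set \<Rightarrow> (('l, 'v) state \<Rightarrow> real) \<Rightarrow> bool" where
  "supermartingale_on G Inv f \<longleftrightarrow>
     (\<forall>l x. (l, x) \<in> Inv \<longrightarrow> (l, x) \<noteq> term_state G \<longrightarrow>
        ((kind G l = AssignLoc \<or> kind G l = NondetLoc) \<longrightarrow>
            (\<forall>\<sigma>' \<in> succs G (l, x). f (l, x) \<ge> f \<sigma>')) \<and>
        (kind G l = ProbLoc \<longrightarrow>
            f (l, x) \<ge> (\<Sum>l' \<in> enabled G l x. prb G l l' x * f (l', step_val G l l' x))))"

end

theory Submission
  imports Defs
begin

context
  fixes G :: "('l, 'v) pcfg"
  assumes wf: "wf_pcfg G"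
begin

lemma enabled_sub: "enabled G l x \<subseteq> {l'. (l, l') \<in> trans G}"
  by (auto simp: enabled_def)

lemma fin_trans_from: "finite {l'. (l, l') \<in> trans G}"
proof -
  have "{l'. (l, l') \<in> trans G} \<subseteq> locs G" using wf unfolding wf_pcfg_def by auto
  then show ?thesis using wf unfolding wf_pcfg_def by (auto intro: finite_subset)
qed

lemma fin_enabled: "finite (enabled G l x)"
  using fin_trans_from enabled_sub finite_subset by metis

lemma fin_succs: "finite (succs G \<sigma>)"
  unfolding succs_def using fin_enabled by simp

lemma ne_succs: "fst \<sigma> \<in> locs G \<Longrightarrow> succs G \<sigma> \<noteq> {}"
  using wf unfolding wf_pcfg_def by (cases \<sigma>) auto

lemma succ_mem: "l' \<in> enabled G l x \<Longrightarrow> (l', step_val G l l' x) \<in> succs G (l, x)"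
  by (auto simp: succs_def)

lemma succ_locs: "\<sigma>' \<in> succs G \<sigma> \<Longrightarrow> fst \<sigma>' \<in> locs G"
  using wf unfolding wf_pcfg_def succs_def enabled_def by auto

lemma prb_pos: "l \<in> locs G \<Longrightarrow> kind G l = ProbLoc \<Longrightarrow> l' \<in> enabled G l x \<Longrightarrow> prb G l l' x > 0"
  using wf unfolding wf_pcfg_def by auto

lemma prb_sum: "l \<in> locs G \<Longrightarrow> kind G l = ProbLoc \<Longrightarrow> (\<Sum>l' \<in> enabled G l x. prb G l l' x) = 1"
  using wf unfolding wf_pcfg_def by auto

lemma assign_single: "l \<in> locs G \<Longrightarrow> kind G l = AssignLoc \<Longrightarrow> \<sigma>' \<in> succs G (l, x) \<Longrightarrow> succs G (l, x) = {\<sigma>'}"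
proof -
  assume l: "l \<in> locs G" and k: "kind G l = AssignLoc" and s: "\<sigma>' \<in> succs G (l, x)"
  have "card {l'. (l, l') \<in> trans G} \<le> 1" using wf l k unfolding wf_pcfg_def by auto
  then have "card (enabled G l x) \<le> 1"
    using card_mono[OF fin_trans_from enabled_sub] by (meson le_trans)
  moreover have "card (succs G (l, x)) \<le> card (enabled G l x)"
    by (simp add: succs_def card_image_le fin_enabled)
  ultimately have "card (succs G (l, x)) \<le> 1" by simp
  then have "\<forall>a\<in>succs G (l, x). \<forall>b\<in>succs G (l, x). a = b"
    using card_le_Suc0_iff_eq[OF fin_succs] by simp
  then show ?thesis using s by blast
qed

lemma reach_succ: "\<sigma> \<in> reachable G \<Longrightarrow> \<sigma>' \<in> succs G \<sigma> \<Longrightarrow> \<sigma>' \<in> reachable G"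
  unfolding reachable_def by (auto intro: rtrancl_into_rtrancl)

lemma reach_locs: "\<sigma> \<in> reachable G \<Longrightarrow> fst \<sigma> \<in> locs G"
  unfolding reachable_def
proof -
  assume "\<sigma> \<in> {\<sigma>. (init_state G, \<sigma>) \<in> {(a, b). b \<in> succs G a}\<^sup>*}"
  then have "(init_state G, \<sigma>) \<in> {(a, b). b \<in> succs G a}\<^sup>*" by simp
  then show "fst \<sigma> \<in> locs G"
    by (induction rule: rtrancl_induct)
      (use wf succ_locs in \<open>auto simp: wf_pcfg_def init_state_def\<close>)
qed

definition Fop :: "(('l, 'v) state \<Rightarrow> real) \<Rightarrow> ('l, 'v) state \<Rightarrow> real" where
  "Fop u \<sigma> = (if \<sigma> = term_state G then 1 else if fst \<sigma> \<notin> locs G then 0 else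
     if kind G (fst \<sigma>) = ProbLoc then
       (\<Sum>l' \<in> enabled G (fst \<sigma>) (snd \<sigma>). prb G (fst \<sigma>) l' (snd \<sigma>) * u (l', step_val G (fst \<sigma>) l' (snd \<sigma>)))
     else Min (u ` succs G \<sigma>))"

lemma Min_img_mono:
  assumes "finite S" "S \<noteq> {}" "\<forall>x\<in>S. f x \<le> (g x :: real)"
  shows "Min (f ` S) \<le> Min (g ` S)"
proof (rule Min.boundedI)
  show "finite (g ` S)" "g ` S \<noteq> {}" using assms by auto
  fix y assume "y \<in> g ` S"
  then obtain x where x: "x \<in> S" "y = g x" by auto
  have "Min (f ` S) \<le> f x" using Min_le[of "f ` S" "f x"] assms x by auto
  then show "Min (f ` S) \<le> y" using assms x by (meson order_trans)
qed

lemma Fop_mono: "(\<And>\<sigma>. u \<sigma> \<le> v \<sigma>) \<Longrightarrow> Fop u \<sigma> \<le> Fop v \<sigma>"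
proof -
  assume uv: "\<And>\<sigma>. u \<sigma> \<le> v \<sigma>"
  obtain l x where sx: "\<sigma> = (l, x)" by (cases \<sigma>)
  show ?thesis
  proof (cases "\<sigma> = term_state G \<or> l \<notin> locs G")
    case True then show ?thesis unfolding Fop_def sx by auto
  next
    case False
    show ?thesis
    proof (cases "kind G l = ProbLoc")
      case True
      have "(\<Sum>l' \<in> enabled G l x. prb G l l' x * u (l', step_val G l l' x))
          \<le> (\<Sum>l' \<in> enabled G l x. prb G l l' x * v (l', step_val G l l' x))"
        by (rule sum_mono, rule mult_left_mono, rule uv)
          (use prb_pos False True in \<open>auto simp: less_imp_le\<close>)
      then show ?thesis using False True unfolding Fop_def sx by auto
    next
      case k: False
      have "Min (u ` succs G (l, x)) \<le> Min (v ` succs G (l, x))"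
        using Min_img_mono[OF fin_succs ne_succs] False uv by auto
      then show ?thesis using False k unfolding Fop_def sx by auto
    qed
  qed
qed

lemma Fop_bounds: "(\<And>\<sigma>. 0 \<le> u \<sigma> \<and> u \<sigma> \<le> 1) \<Longrightarrow> 0 \<le> Fop u \<sigma> \<and> Fop u \<sigma> \<le> 1"
proof -
  assume b: "\<And>\<sigma>. 0 \<le> u \<sigma> \<and> u \<sigma> \<le> 1"
  obtain l x where sx: "\<sigma> = (l, x)" by (cases \<sigma>)
  show ?thesis
  proof (cases "\<sigma> = term_state G \<or> l \<notin> locs G")
    case True then show ?thesis unfolding Fop_def sx by auto
  next
    case False
    show ?thesis
    proof (cases "kind G l = ProbLoc")
      case True
      have pp: "\<And>l'. l' \<in> enabled G l x \<Longrightarrow> 0 \<le> prb G l l' x"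
        using prb_pos False True by (auto simp: less_imp_le)
      have "(\<Sum>l' \<in> enabled G l x. prb G l l' x * u (l', step_val G l l' x))
          \<le> (\<Sum>l' \<in> enabled G l x. prb G l l' x * 1)"
        by (rule sum_mono, rule mult_left_mono) (use b pp in auto)
      also have "\<dots> = 1" using prb_sum False True by auto
      finally have "(\<Sum>l' \<in> enabled G l x. prb G l l' x * u (l', step_val G l l' x)) \<le> 1" .
      moreover have "0 \<le> (\<Sum>l' \<in> enabled G l x. prb G l l' x * u (l', step_val G l l' x))"
        by (rule sum_nonneg) (use b pp in auto)
      ultimately show ?thesis using False True unfolding Fop_def sx by auto
    next
      case k: False
      have fin: "finite (u ` succs G (l, x))" and ne: "u ` succs G (l, x) \<noteq> {}"
        using fin_succs ne_succs False by auto
      have "Min (u ` succs G (l, x)) \<in> u ` succs G (l, x)" using Min_in[OF fin ne] .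
      then have "0 \<le> Min (u ` succs G (l, x)) \<and> Min (u ` succs G (l, x)) \<le> 1" using b by auto
      then show ?thesis using False k unfolding Fop_def sx by auto
    qed
  qed
qed

definition PP :: "(('l, 'v) state \<Rightarrow> real) set" where
  "PP = {u. (\<forall>\<sigma>. 0 \<le> u \<sigma> \<and> u \<sigma> \<le> 1) \<and> (\<forall>\<sigma>. Fop u \<sigma> \<le> u \<sigma>)}"

definition W :: "('l, 'v) state \<Rightarrow> real" where
  "W \<sigma> = (INF u \<in> PP. u \<sigma>)"

lemma one_PP: "(\<lambda>_. 1) \<in> PP"
  unfolding PP_def using Fop_bounds[of "\<lambda>_. 1"] by auto

lemma W_le: "u \<in> PP \<Longrightarrow> W \<sigma> \<le> u \<sigma>"
  unfolding W_def
proof (rule cINF_lower)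
  show "bdd_below ((\<lambda>u. u \<sigma>) ` PP)"
  proof (rule bdd_belowI[of _ 0])
    fix y assume "y \<in> (\<lambda>u. u \<sigma>) ` PP" then show "0 \<le> y" unfolding PP_def by blast
  qed
qed

lemma W_ge: "0 \<le> W \<sigma>"
  unfolding W_def
proof (rule cINF_greatest)
  show "PP \<noteq> {}" using one_PP by auto
  fix u assume "u \<in> PP" then show "0 \<le> u \<sigma>" unfolding PP_def by blast
qed

lemma W_bounds: "0 \<le> W \<sigma> \<and> W \<sigma> \<le> 1"
  using W_ge W_le[OF one_PP] by auto

lemma FW_le: "Fop W \<sigma> \<le> W \<sigma>"
  unfolding W_def[of \<sigma>]
proof (rule cINF_greatest)
  show "PP \<noteq> {}" using one_PP by auto
  fix u assume u: "u \<in> PP"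
  have "Fop W \<sigma> \<le> Fop u \<sigma>" by (rule Fop_mono, rule W_le[OF u])
  also have "\<dots> \<le> u \<sigma>" using u unfolding PP_def by blast
  finally show "Fop W \<sigma> \<le> u \<sigma>" .
qed

lemma FW_PP: "Fop W \<in> PP"
  unfolding PP_def
proof (intro CollectI conjI allI)
  fix \<sigma>
  show "0 \<le> Fop W \<sigma>" "Fop W \<sigma> \<le> 1" using Fop_bounds[of W \<sigma>] W_bounds by auto
  show "Fop (Fop W) \<sigma> \<le> Fop W \<sigma>" by (rule Fop_mono, rule FW_le)
qed

lemma W_fix: "Fop W \<sigma> = W \<sigma>"
  using FW_le W_le[OF FW_PP] by (meson order_antisym)

primrec attr :: "nat \<Rightarrow> ('l, 'v) state set" where
  "attr 0 = {term_state G}"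
| "attr (Suc n) = attr n \<union> {\<sigma>. \<sigma> \<noteq> term_state G \<and> fst \<sigma> \<in> locs G \<and>
     (if kind G (fst \<sigma>) = ProbLoc
      then (\<exists>l' \<in> enabled G (fst \<sigma>) (snd \<sigma>). (l', step_val G (fst \<sigma>) l' (snd \<sigma>)) \<in> attr n)
      else succs G \<sigma> \<subseteq> attr n)}"

definition AA where "AA = (\<Union>n. attr n)"

lemma attr_mono: "m \<le> n \<Longrightarrow> attr m \<subseteq> attr n"
  by (rule lift_Suc_mono_le[of attr]) auto

lemma fin_attr: "finite S \<Longrightarrow> S \<subseteq> AA \<Longrightarrow> \<exists>n. S \<subseteq> attr n"
proof (induction S rule: finite_induct)
  case empty then show ?case by auto
next
  case (insert a S)
  then obtain n where n: "S \<subseteq> attr n" by auto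
  obtain m where m: "a \<in> attr m" using insert.prems by (auto simp: AA_def)
  have "S \<subseteq> attr (max n m)" "a \<in> attr (max n m)"
    using n m attr_mono[of n "max n m"] attr_mono[of m "max n m"] by auto
  then show ?case by auto
qed

lemma W_zero: "\<sigma> \<notin> AA \<Longrightarrow> W \<sigma> = 0"
proof -
  assume nA: "\<sigma> \<notin> AA"
  define u where "u = (\<lambda>\<sigma>. if \<sigma> \<in> AA then W \<sigma> else 0)"
  have uW: "\<And>\<sigma>. u \<sigma> \<le> W \<sigma>" unfolding u_def using W_bounds by auto
  have bot: "term_state G \<in> AA" unfolding AA_def by (auto intro: exI[of _ 0])
  have "u \<in> PP"
    unfolding PP_def
  proof (intro CollectI conjI allI)
    fix \<tau>
    show "0 \<le> u \<tau>" "u \<tau> \<le> 1" unfolding u_def using W_bounds by auto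
    obtain l x where tx: "\<tau> = (l, x)" by (cases \<tau>)
    show "Fop u \<tau> \<le> u \<tau>"
    proof (cases "\<tau> \<in> AA")
      case True
      then show ?thesis using Fop_mono[of u W \<tau>, OF uW] W_fix[of \<tau>] unfolding u_def by auto
    next
      case nT: False
      then have ntb: "\<tau> \<noteq> term_state G" using bot by auto
      show ?thesis
      proof (cases "l \<in> locs G")
        case False then show ?thesis using ntb W_ge unfolding Fop_def tx u_def by auto
      next
        case L: True
        show ?thesis
        proof (cases "kind G l = ProbLoc")
          case True
          have "\<forall>l' \<in> enabled G l x. (l', step_val G l l' x) \<notin> AA"
          proof (intro ballI notI)
            fix l' assume "l' \<in> enabled G l x" "(l', step_val G l l' x) \<in> AA"
            then obtain n where "(l', step_val G l l' x) \<in> attr n" by (auto simp: AA_def)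
            then have "\<tau> \<in> attr (Suc n)" using \<open>l' \<in> enabled G l x\<close> L True ntb tx by auto
            then show False using nT unfolding AA_def by blast
          qed
          then have "(\<Sum>l' \<in> enabled G l x. prb G l l' x * u (l', step_val G l l' x)) = 0"
            unfolding u_def by (intro sum.neutral) auto
          then show ?thesis using ntb L True W_ge unfolding Fop_def tx by (simp add: u_def)
        next
          case k: False
          have "\<not> succs G \<tau> \<subseteq> AA"
          proof
            assume "succs G \<tau> \<subseteq> AA"
            then obtain n where "succs G \<tau> \<subseteq> attr n" using fin_attr fin_succs by blast
            then have "\<tau> \<in> attr (Suc n)" using L k ntb tx by auto
            then show False using nT unfolding AA_def by blast
          qed
          then obtain \<tau>' where t': "\<tau>' \<in> succs G \<tau>" "\<tau>' \<notin> AA" by auto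
          have "Min (u ` succs G \<tau>) \<le> u \<tau>'" using t' fin_succs by auto
          then show ?thesis using ntb L k t' nT unfolding Fop_def tx by (simp add: u_def)
        qed
      qed
    qed
  qed
  then have "W \<sigma> \<le> u \<sigma>" by (rule W_le)
  then show ?thesis using nA W_bounds[of \<sigma>] unfolding u_def by auto
qed

lemma rw_bounds:
  "valid_sched G s \<Longrightarrow> \<pi> \<noteq> [] \<Longrightarrow> last \<pi> \<in> reachable G \<Longrightarrow>
   0 \<le> reach_within G s n \<pi> \<and> reach_within G s n \<pi> \<le> 1"
proof (induction n arbitrary: \<pi>)
  case 0 then show ?case by simp
next
  case (Suc n)
  obtain l x where lx: "last \<pi> = (l, x)" by (cases "last \<pi>")
  have L: "l \<in> locs G" using reach_locs[OF Suc.prems(3)] lx by simp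
  have IH: "\<And>\<sigma>'. \<sigma>' \<in> succs G (l, x) \<Longrightarrow>
      0 \<le> reach_within G s n (\<pi> @ [\<sigma>']) \<and> reach_within G s n (\<pi> @ [\<sigma>']) \<le> 1"
    using Suc.IH Suc.prems reach_succ lx by (metis last_snoc snoc_eq_iff_butlast)
  show ?case
  proof (cases "last \<pi> = term_state G")
    case True then show ?thesis by simp
  next
    case nb: False
    show ?thesis
    proof (cases "kind G l")
      case ProbLoc
      have pp: "\<And>l'. l' \<in> enabled G l x \<Longrightarrow> 0 \<le> prb G l l' x"
        using prb_pos L ProbLoc by (auto simp: less_imp_le)
      have ih: "\<And>l'. l' \<in> enabled G l x \<Longrightarrow>
         0 \<le> reach_within G s n (\<pi> @ [(l', step_val G l l' x)]) \<and>
         reach_within G s n (\<pi> @ [(l', step_val G l l' x)]) \<le> 1"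
        using IH succ_mem by blast
      have "(\<Sum>l' \<in> enabled G l x. prb G l l' x * reach_within G s n (\<pi> @ [(l', step_val G l l' x)]))
          \<le> (\<Sum>l' \<in> enabled G l x. prb G l l' x * 1)"
        by (rule sum_mono, rule mult_left_mono) (use ih pp in auto)
      also have "\<dots> = 1" using prb_sum L ProbLoc by auto
      finally have "(\<Sum>l' \<in> enabled G l x. prb G l l' x * reach_within G s n (\<pi> @ [(l', step_val G l l' x)])) \<le> 1" .
      moreover have "0 \<le> (\<Sum>l' \<in> enabled G l x. prb G l l' x * reach_within G s n (\<pi> @ [(l', step_val G l l' x)]))"
        by (rule sum_nonneg) (use ih pp in auto)
      ultimately show ?thesis using nb ProbLoc lx by simp
    next
      case NondetLoc
      have "s \<pi> \<in> succs G (l, x)" using Suc.prems(1,2) L NondetLoc lx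
        unfolding valid_sched_def by auto
      then show ?thesis using IH nb NondetLoc lx by simp
    next
      case AssignLoc
      have "(SOME \<sigma>'. \<sigma>' \<in> succs G (l, x)) \<in> succs G (l, x)"
        using ne_succs[of "(l, x)"] L by (auto intro: someI_ex)
      then show ?thesis using IH nb AssignLoc lx by simp
    qed
  qed
qed

definition sch :: "('l, 'v) scheduler" where
  "sch \<pi> = (if \<exists>\<sigma>' \<in> succs G (last \<pi>). W \<sigma>' \<le> W (last \<pi>)
            then SOME \<sigma>'. \<sigma>' \<in> succs G (last \<pi>) \<and> W \<sigma>' \<le> W (last \<pi>)
            else SOME \<sigma>'. \<sigma>' \<in> succs G (last \<pi>))"

lemma W_min: "fst \<sigma> \<in> locs G \<Longrightarrow> \<sigma> \<noteq> term_state G \<Longrightarrow> kind G (fst \<sigma>) \<noteq> ProbLoc \<Longrightarrow>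
   W \<sigma> = Min (W ` succs G \<sigma>)"
  using W_fix[of \<sigma>] unfolding Fop_def by auto

lemma sch_good: "fst \<sigma> \<in> locs G \<Longrightarrow> \<sigma> \<noteq> term_state G \<Longrightarrow> kind G (fst \<sigma>) \<noteq> ProbLoc \<Longrightarrow>
   \<exists>\<sigma>' \<in> succs G \<sigma>. W \<sigma>' \<le> W \<sigma>"
proof -
  assume a: "fst \<sigma> \<in> locs G" "\<sigma> \<noteq> term_state G" "kind G (fst \<sigma>) \<noteq> ProbLoc"
  have "Min (W ` succs G \<sigma>) \<in> W ` succs G \<sigma>"
    using Min_in fin_succs ne_succs[OF a(1)] by blast
  then show ?thesis using W_min[OF a] by auto
qed

lemma sch_in: "fst (last \<pi>) \<in> locs G \<Longrightarrow> sch \<pi> \<in> succs G (last \<pi>)"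
proof -
  assume a: "fst (last \<pi>) \<in> locs G"
  show ?thesis
  proof (cases "\<exists>\<sigma>' \<in> succs G (last \<pi>). W \<sigma>' \<le> W (last \<pi>)")
    case True
    then have "\<exists>\<sigma>'. \<sigma>' \<in> succs G (last \<pi>) \<and> W \<sigma>' \<le> W (last \<pi>)" by blast
    from someI_ex[OF this] True show ?thesis unfolding sch_def by auto
  next
    case False
    have "\<exists>\<sigma>'. \<sigma>' \<in> succs G (last \<pi>)" using ne_succs[OF a] by blast
    from someI_ex[OF this] False show ?thesis unfolding sch_def by auto
  qed
qed

lemma sch_W: "fst (last \<pi>) \<in> locs G \<Longrightarrow> last \<pi> \<noteq> term_state G \<Longrightarrow> kind G (fst (last \<pi>)) \<noteq> ProbLoc \<Longrightarrow>
   W (sch \<pi>) \<le> W (last \<pi>)"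
proof -
  assume a: "fst (last \<pi>) \<in> locs G" "last \<pi> \<noteq> term_state G" "kind G (fst (last \<pi>)) \<noteq> ProbLoc"
  have T: "\<exists>\<sigma>' \<in> succs G (last \<pi>). W \<sigma>' \<le> W (last \<pi>)" using sch_good[OF a] .
  then have "\<exists>\<sigma>'. \<sigma>' \<in> succs G (last \<pi>) \<and> W \<sigma>' \<le> W (last \<pi>)" by blast
  from someI_ex[OF this] T show ?thesis unfolding sch_def by auto
qed

lemma sch_valid: "valid_sched G sch"
  unfolding valid_sched_def using sch_in by auto

lemma W_bot: "W (term_state G) = 1"
  using W_fix[of "term_state G"] unfolding Fop_def by auto

lemma rw_W:
  "\<pi> \<noteq> [] \<Longrightarrow> last \<pi> \<in> reachable G \<Longrightarrow> reach_within G sch n \<pi> \<le> W (last \<pi>)"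
proof (induction n arbitrary: \<pi>)
  case 0 then show ?case using W_bot W_ge by simp
next
  case (Suc n)
  obtain l x where lx: "last \<pi> = (l, x)" by (cases "last \<pi>")
  have L: "l \<in> locs G" using reach_locs[OF Suc.prems(2)] lx by simp
  have IH: "\<And>\<sigma>'. \<sigma>' \<in> succs G (l, x) \<Longrightarrow> reach_within G sch n (\<pi> @ [\<sigma>']) \<le> W \<sigma>'"
    using Suc.IH Suc.prems reach_succ lx by (metis last_snoc snoc_eq_iff_butlast)
  show ?case
  proof (cases "last \<pi> = term_state G")
    case True then show ?thesis using W_bot by simp
  next
    case nb: False
    show ?thesis
    proof (cases "kind G l")
      case ProbLoc
      have pp: "\<And>l'. l' \<in> enabled G l x \<Longrightarrow> 0 \<le> prb G l l' x"
        using prb_pos L ProbLoc by (auto simp: less_imp_le)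
      have "(\<Sum>l' \<in> enabled G l x. prb G l l' x * reach_within G sch n (\<pi> @ [(l', step_val G l l' x)]))
          \<le> (\<Sum>l' \<in> enabled G l x. prb G l l' x * W (l', step_val G l l' x))"
        by (rule sum_mono, rule mult_left_mono) (use IH succ_mem pp in auto)
      also have "\<dots> = W (l, x)" using W_fix[of "(l, x)"] nb lx L ProbLoc unfolding Fop_def by auto
      finally show ?thesis using nb ProbLoc lx by simp
    next
      case NondetLoc
      have "sch \<pi> \<in> succs G (l, x)" using sch_in[of \<pi>] L lx by simp
      moreover have "W (sch \<pi>) \<le> W (l, x)" using sch_W[of \<pi>] L lx nb NondetLoc by simp
      ultimately show ?thesis using IH[of "sch \<pi>"] nb NondetLoc lx by simp
    next
      case AssignLoc
      define a where "a = (SOME \<sigma>'. \<sigma>' \<in> succs G (l, x))"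
      have a: "a \<in> succs G (l, x)"
        using ne_succs[of "(l, x)"] L unfolding a_def by (auto intro: someI_ex)
      have "succs G (l, x) = {a}" using assign_single[OF L AssignLoc a] .
      then have "W (l, x) = W a" using W_min[of "(l, x)"] L nb lx AssignLoc by auto
      then show ?thesis using IH[OF a] nb AssignLoc lx by (simp add: a_def)
    qed
  qed
qed

lemma Pr_le_W: "Pr_term G \<le> W (init_state G)"
proof -
  have initR: "init_state G \<in> reachable G" unfolding reachable_def by auto
  have "Pr_term G \<le> term_prob G sch"
    unfolding Pr_term_def
  proof (rule cINF_lower)
    show "sch \<in> {s. valid_sched G s}" using sch_valid by auto
    show "bdd_below (term_prob G ` {s. valid_sched G s})"
    proof (rule bdd_belowI[of _ 0])
      fix y assume "y \<in> term_prob G ` {s. valid_sched G s}"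
      then obtain s where s: "valid_sched G s" "y = term_prob G s" by auto
      have b: "\<And>n. 0 \<le> reach_within G s n [init_state G] \<and> reach_within G s n [init_state G] \<le> 1"
        using rw_bounds[OF s(1)] initR by simp
      have "reach_within G s 0 [init_state G] \<le> (SUP n. reach_within G s n [init_state G])"
        by (rule cSUP_upper) (use b in \<open>auto intro!: bdd_aboveI[of _ 1]\<close>)
      then show "0 \<le> y" using b[of 0] s(2) unfolding term_prob_def by linarith
    qed
  qed
  also have "term_prob G sch \<le> W (init_state G)"
    unfolding term_prob_def
    by (rule cSUP_least) (use rw_W[of "[init_state G]"] initR in auto)
  finally show ?thesis .
qed

definition rk where "rk \<sigma> = (LEAST n. \<sigma> \<in> attr n)"
definition UU where "UU \<sigma> = (if W \<sigma> = 0 \<or> \<sigma> = term_state G then 0 else rk \<sigma>)"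

lemma UU_le: "\<tau> \<in> attr m \<Longrightarrow> UU \<tau> \<le> m"
  unfolding UU_def rk_def by (auto intro: Least_le)

lemma UU_step: "W \<sigma> \<noteq> 0 \<Longrightarrow> \<sigma> \<noteq> term_state G \<Longrightarrow>
  \<exists>j. UU \<sigma> = Suc j \<and> fst \<sigma> \<in> locs G \<and>
     (if kind G (fst \<sigma>) = ProbLoc
      then (\<exists>l' \<in> enabled G (fst \<sigma>) (snd \<sigma>). (l', step_val G (fst \<sigma>) l' (snd \<sigma>)) \<in> attr j)
      else succs G \<sigma> \<subseteq> attr j)"
proof -
  assume a: "W \<sigma> \<noteq> 0" "\<sigma> \<noteq> term_state G"
  have "\<sigma> \<in> AA" using W_zero a by blast
  then obtain n where "\<sigma> \<in> attr n" by (auto simp: AA_def)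
  then have in_rk: "\<sigma> \<in> attr (rk \<sigma>)" unfolding rk_def by (rule LeastI)
  have "rk \<sigma> \<noteq> 0"
  proof
    assume "rk \<sigma> = 0" with in_rk a show False by simp
  qed
  then obtain j where j: "rk \<sigma> = Suc j" using not0_implies_Suc by blast
  have "\<sigma> \<notin> attr j" using j unfolding rk_def by (metis lessI not_less_Least)
  then have "\<sigma> \<noteq> term_state G \<and> fst \<sigma> \<in> locs G \<and>
     (if kind G (fst \<sigma>) = ProbLoc
      then (\<exists>l' \<in> enabled G (fst \<sigma>) (snd \<sigma>). (l', step_val G (fst \<sigma>) l' (snd \<sigma>)) \<in> attr j)
      else succs G \<sigma> \<subseteq> attr j)" using in_rk j by simp
  moreover have "UU \<sigma> = Suc j" using a j unfolding UU_def by simp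
  ultimately show ?thesis by blast
qed

end


theorem mainTheorem8:
  fixes G :: "('l, 'v :: finite) pcfg" and p :: real
  assumes "wf_pcfg G"
    and "finite_state G"
    and "0 < p" and "p < 1"
    and "Pr_term G \<ge> 1 - p"
  shows "\<exists>Inv SI (\<epsilon>::real) (U :: ('l, 'v) state \<Rightarrow> nat).
     inductive_invariant G Inv \<and> init_state G \<in> Inv \<and>
     SI (init_state G) \<le> p \<and> (\<forall>\<gamma> \<in> Inv. SI \<gamma> \<ge> 0) \<and> supermartingale_on G Inv SI \<and>
     \<epsilon> > 0 \<and>
     (\<exists>H. \<forall>\<gamma> \<in> Inv. U \<gamma> \<le> H) \<and>
     (\<forall>\<gamma> \<in> Inv. (SI \<gamma> \<ge> 1 \<or> \<gamma> = term_state G) \<longrightarrow> U \<gamma> = 0) \<and>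
     (\<forall>l x. (l, x) \<in> Inv \<longrightarrow> \<not> (SI (l, x) \<ge> 1 \<or> (l, x) = term_state G) \<longrightarrow>
        ((kind G l = AssignLoc \<or> kind G l = NondetLoc) \<longrightarrow>
            (\<forall>\<sigma>' \<in> succs G (l, x). U \<sigma>' < U (l, x))) \<and>
        (kind G l = ProbLoc \<longrightarrow>
            (\<Sum>l' \<in> {l' \<in> enabled G l x. U (l', step_val G l l' x) < U (l, x)}.
                prb G l l' x) > \<epsilon>))"
proof -
  note wf = assms(1)
  define Inv where "Inv = reachable G"
  define SI where "SI = (\<lambda>\<sigma>. 1 - W G \<sigma>)"
  define E where "E = (\<Union>\<sigma> \<in> Inv \<inter> {\<sigma>. kind G (fst \<sigma>) = ProbLoc}.
      (\<lambda>l'. prb G (fst \<sigma>) l' (snd \<sigma>)) ` enabled G (fst \<sigma>) (snd \<sigma>))"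
  define \<epsilon> where "\<epsilon> = (if E = {} then 1 else Min E / 2)"
  define U where "U = UU G"
  have finInv: "finite Inv" using assms(2) unfolding Inv_def finite_state_def .
  have finE: "finite E" unfolding E_def using finInv fin_enabled[OF wf] by auto
  have Epos: "\<And>e. e \<in> E \<Longrightarrow> 0 < e"
    unfolding E_def Inv_def using prb_pos[OF wf] reach_locs[OF wf] by fastforce
  have eps: "\<epsilon> > 0" unfolding \<epsilon>_def using Epos Min_in[OF finE] by auto
  have epsE: "\<And>e. e \<in> E \<Longrightarrow> \<epsilon> < e"
  proof -
    fix e assume e: "e \<in> E"
    then have "Min E \<le> e" "0 < Min E" using Min_le[OF finE] Epos Min_in[OF finE] by auto
    then show "\<epsilon> < e" unfolding \<epsilon>_def using e by auto
  qed
  have inv: "inductive_invariant G Inv"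
    unfolding inductive_invariant_def Inv_def using reach_succ[OF wf] by blast
  have init: "init_state G \<in> Inv" unfolding Inv_def reachable_def by auto
  have SIinit: "SI (init_state G) \<le> p"
    using Pr_le_W[OF wf] assms(5) unfolding SI_def by linarith
  have SIpos: "\<forall>\<gamma> \<in> Inv. SI \<gamma> \<ge> 0" unfolding SI_def using W_bounds[OF wf] by auto
  have sm: "supermartingale_on G Inv SI"
    unfolding supermartingale_on_def
  proof (intro allI impI conjI ballI)
    fix l x assume r: "(l, x) \<in> Inv" and nb: "(l, x) \<noteq> term_state G"
    have L: "l \<in> locs G" using reach_locs[OF wf] r unfolding Inv_def by fastforce
    {
      fix \<sigma>' assume k: "kind G l = AssignLoc \<or> kind G l = NondetLoc" and s: "\<sigma>' \<in> succs G (l, x)"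
      have "W G (l, x) = Min (W G ` succs G (l, x))" using W_min[OF wf, of "(l, x)"] L nb k by auto
      also have "\<dots> \<le> W G \<sigma>'" using s fin_succs[OF wf] by auto
      finally show "SI \<sigma>' \<le> SI (l, x)" unfolding SI_def by simp
    }
    {
      assume k: "kind G l = ProbLoc"
      have "W G (l, x) = (\<Sum>l' \<in> enabled G l x. prb G l l' x * W G (l', step_val G l l' x))"
        using W_fix[OF wf, of "(l, x)"] L nb k unfolding Fop_def[OF wf] by auto
      then have "(\<Sum>l' \<in> enabled G l x. prb G l l' x * SI (l', step_val G l l' x))
          = (\<Sum>l' \<in> enabled G l x. prb G l l' x) - W G (l, x)"
        unfolding SI_def by (simp add: right_diff_distrib sum_subtractf)
      also have "\<dots> = SI (l, x)" using prb_sum[OF wf L k] unfolding SI_def by simp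
      finally show "(\<Sum>l' \<in> enabled G l x. prb G l l' x * SI (l', step_val G l l' x)) \<le> SI (l, x)" by simp
    }
  qed
  have H: "\<exists>H. \<forall>\<gamma> \<in> Inv. U \<gamma> \<le> H"
  proof -
    have "finite (U ` Inv)" using finInv by simp
    then obtain H where "\<forall>n \<in> U ` Inv. n \<le> H" using finite_nat_set_iff_bounded_le by blast
    then show ?thesis by auto
  qed
  have W0: "\<And>\<gamma>. \<gamma> \<in> Inv \<Longrightarrow> SI \<gamma> \<ge> 1 \<longleftrightarrow> W G \<gamma> = 0"
    unfolding SI_def using W_bounds[OF wf] by (auto simp: order_antisym)
  have Uz: "\<forall>\<gamma> \<in> Inv. (SI \<gamma> \<ge> 1 \<or> \<gamma> = term_state G) \<longrightarrow> U \<gamma> = 0"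
    using W0 unfolding U_def UU_def[OF wf] by auto
  have Ustep: "\<forall>l x. (l, x) \<in> Inv \<longrightarrow> \<not> (SI (l, x) \<ge> 1 \<or> (l, x) = term_state G) \<longrightarrow>
        ((kind G l = AssignLoc \<or> kind G l = NondetLoc) \<longrightarrow>
            (\<forall>\<sigma>' \<in> succs G (l, x). U \<sigma>' < U (l, x))) \<and>
        (kind G l = ProbLoc \<longrightarrow>
            (\<Sum>l' \<in> {l' \<in> enabled G l x. U (l', step_val G l l' x) < U (l, x)}.
                prb G l l' x) > \<epsilon>)"
  proof (intro allI impI conjI ballI)
    fix l x assume r: "(l, x) \<in> Inv" and c: "\<not> (SI (l, x) \<ge> 1 \<or> (l, x) = term_state G)"
    have L: "l \<in> locs G" using reach_locs[OF wf] r unfolding Inv_def by fastforce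
    have w: "W G (l, x) \<noteq> 0" using W0[OF r] c by auto
    have nb: "(l, x) \<noteq> term_state G" using c by auto
    obtain j where j: "U (l, x) = Suc j"
      and cond: "if kind G l = ProbLoc
      then (\<exists>l' \<in> enabled G l x. (l', step_val G l l' x) \<in> attr G j)
      else succs G (l, x) \<subseteq> attr G j"
      using UU_step[OF wf w nb] unfolding U_def fst_conv snd_conv by blast
    {
      fix \<sigma>' assume k: "kind G l = AssignLoc \<or> kind G l = NondetLoc" and s: "\<sigma>' \<in> succs G (l, x)"
      have "\<sigma>' \<in> attr G j" using cond k s by auto
      then have "U \<sigma>' \<le> j" unfolding U_def by (rule UU_le[OF wf])
      then show "U \<sigma>' < U (l, x)" using j by simp
    }
    {
      assume k: "kind G l = ProbLoc"
      obtain l' where l': "l' \<in> enabled G l x" "(l', step_val G l l' x) \<in> attr G j"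
        using cond k by auto
      have "U (l', step_val G l l' x) \<le> j" unfolding U_def by (rule UU_le[OF wf l'(2)])
      then have mem: "l' \<in> {l' \<in> enabled G l x. U (l', step_val G l l' x) < U (l, x)}"
        using j l'(1) by simp
      have "prb G l l' x \<in> E" unfolding E_def using r k l'(1) by force
      then have "\<epsilon> < prb G l l' x" by (rule epsE)
      also have "prb G l l' x \<le> (\<Sum>l' \<in> {l' \<in> enabled G l x. U (l', step_val G l l' x) < U (l, x)}. prb G l l' x)"
        by (rule member_le_sum[OF mem])
          (use prb_pos[OF wf L k] fin_enabled[OF wf] in \<open>auto simp: less_imp_le\<close>)
      finally show "(\<Sum>l' \<in> {l' \<in> enabled G l x. U (l', step_val G l l' x) < U (l, x)}. prb G l l' x) > \<epsilon>" .
    }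
  qed
  show ?thesis
    using inv init SIinit SIpos sm eps H Uz Ustep by blast
qed

end
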